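(* Let $S$ be a finite set and let $\mathcal{F}\subseteq 2^S$ be a non-trivial family, and let $\mathcal{I}=\{Y\subseteq S\mid \exists X\in\mathcal{F},\ Y\subseteq X\}$ be the downset of $(2^S,\subseteq)$ generated by $\mathcal{F}$. Let $\mathcal{F}'=\{2^X\mid X\in\mathcal{F}\}$ (which is also non-trivial) and let $L$ be the intersection lattice of $\mathcal{F}'$. Then $\mathrm{ncpd}(\mathcal{I})=\mathrm{nci}(L)$.
   Context: A finite family $\mathcal{F}$ of sets is non-trivial if it is non-empty and no $X\in\mathcal{F}$ satisfies $X=\bigcup\mathcal{F}$. For such $\mathcal{F}$ and non-empty $\mathcal{T}\subseteq\mathcal{F}$, let $S_{\mathcal{T}}=\bigcap\mathcal{T}$, and let $S_\emptyset=\bigcup\mathcal{F}$. The intersection lattice of $\mathcal{F}$ is $\mathbb{L}_{\mathcal{F}}=(\{S_{\mathcal{T}}\mid\mathcal{T}\subseteq\mathcal{F}\},\subseteq)$, with greatest element $\hat 1=\bigcup\mathcal{F}$. The Möbius function of a finite poset $P$ is given for $x\le y$ by $\mu_P(y,y)=1$ and $\mu_P(x,y)=-\sum_{x<z\le y}\mu_P(z,y)$; $\mathrm{nci}(L)=\{U\in L\mid U\neq\hat 1,\ \mu_L(U,\hat 1)\neq 0\}$. For a configuration $\mathcal{C}\subseteq 2^S$, the generalized Möbius function $\hat\mu_{\mathcal{C}}:2^S\to\mathbb{Z}$ is defined by top-down induction: $\hat\mu_{\mathcal{C}}(X)=[X\in\mathcal{C}]-\sum_{X\subsetneq X'\subseteq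 S}\hat\mu_{\mathcal{C}}(X')$ (with $[X\in\mathcal{C}]\in\{0,1\}$ the indicator). The non-cancelling principal downsets are $\mathrm{ncpd}(\mathcal{C})=\{2^X\mid X\subseteq S,\ \hat\mu_{\mathcal{C}}(X)\neq 0\}$, where $2^X=\{Y\subseteq S\mid Y\subseteq X\}$. *)

theory Defs
  imports Main
begin

definition nontrivial_family :: "'a set set \<Rightarrow> bool" where
  "nontrivial_family F \<longleftrightarrow> finite F \<and> F \<noteq> {} \<and> (\<forall>X\<in>F. X \<noteq> \<Union>F)"

definition int_lattice :: "'a set set \<Rightarrow> 'a set set" where
  "int_lattice F = {\<Inter>T | T. T \<subseteq> F \<and> T \<noteq> {}} \<union> {\<Union>F}"

function mobius :: "'a set set \<Rightarrow> 'a set \<Rightarrow> 'a set \<Rightarrow> int" where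
  "mobius P x y =
    (if finite P \<and> x \<in> P \<and> y \<in> P \<and> x \<subseteq> y then
       (if x = y then 1
        else - (\<Sum>z\<in>{z\<in>P. x \<subset> z \<and> z \<subseteq> y}. mobius P z y))
     else 0)"
  by auto
termination
proof (relation "measure (\<lambda>(P, x, y). card {w\<in>P. x \<subset> w})")
  fix P :: "'a set set" and x y z
  assume h: "finite P \<and> x \<in> P \<and> y \<in> P \<and> x \<subseteq> y" "z \<in> {z\<in>P. x \<subset> z \<and> z \<subseteq> y}"
  have "{w\<in>P. z \<subset> w} \<subset> {w\<in>P. x \<subset> w}" using h by auto
  then have "card {w\<in>P. z \<subset> w} < card {w\<in>P. x \<subset> w}"
    using h by (intro psubset_card_mono) auto
  then show "((P, z, y), P, x, y) \<in> measure (\<lambda>(P, x, y). card {w\<in>P. x \<subset> w})" by simp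
qed simp_all

definition nci :: "'a set set \<Rightarrow> 'a set \<Rightarrow> 'a set set" where
  "nci L t = {U \<in> L. U \<noteq> t \<and> mobius L U t \<noteq> 0}"

function gen_mobius :: "'a set \<Rightarrow> 'a set set \<Rightarrow> 'a set \<Rightarrow> int" where
  "gen_mobius S C X =
    (if finite S \<and> X \<subseteq> S then
       (if X \<in> C then 1 else 0) - (\<Sum>X'\<in>{X'. X \<subset> X' \<and> X' \<subseteq> S}. gen_mobius S C X')
     else 0)"
  by auto
termination
proof (relation "measure (\<lambda>(S, C, X). card {W. X \<subset> W \<and> W \<subseteq> S})")
  fix S :: "'a set" and C :: "'a set set" and X X'
  assume h: "finite S \<and> X \<subseteq> S" "X' \<in> {X'. X \<subset> X' \<and> X' \<subseteq> S}"
  have "{W. X' \<subset> W \<and> W \<subseteq> S} \<subseteq> {W. X \<subset> W \<and> W \<subseteq> S}" using h by blast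
  moreover have "X' \<in> {W. X \<subset> W \<and> W \<subseteq> S}" "X' \<notin> {W. X' \<subset> W \<and> W \<subseteq> S}" using h by auto
  ultimately have "{W. X' \<subset> W \<and> W \<subseteq> S} \<subset> {W. X \<subset> W \<and> W \<subseteq> S}" by blast
  moreover have "finite {W. X \<subset> W \<and> W \<subseteq> S}"
  proof (rule finite_subset[of _ "Pow S"])
    show "{W. X \<subset> W \<and> W \<subseteq> S} \<subseteq> Pow S" by blast
    show "finite (Pow S)" using h by simp
  qed
  ultimately have "card {W. X' \<subset> W \<and> W \<subseteq> S} < card {W. X \<subset> W \<and> W \<subseteq> S}"
    by (simp add: psubset_card_mono)
  then show "((S, C, X'), S, C, X) \<in> measure (\<lambda>(S, C, X). card {W. X \<subset> W \<and> W \<subseteq> S})" by simp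
qed simp_all

text \<open>Non-cancelling principal downsets; 2^X = {Y subset of S. Y subset of X} = Pow X for X in 2^S.\<close>
definition ncpd :: "'a set \<Rightarrow> 'a set set \<Rightarrow> 'a set set set" where
  "ncpd S C = {{Y. Y \<subseteq> S \<and> Y \<subseteq> X} | X. X \<subseteq> S \<and> gen_mobius S C X \<noteq> 0}"

end

theory Submission
  imports Defs
begin

declare mobius.simps[simp del] gen_mobius.simps[simp del]

lemma mobius_sum_zero:
  assumes "finite P" "x \<in> P" "y \<in> P" "x \<subseteq> y" "x \<noteq> y"
  shows "(\<Sum>z\<in>{z\<in>P. x \<subseteq> z \<and> z \<subseteq> y}. mobius P z y) = 0"
proof -
  have e: "{z\<in>P. x \<subseteq> z \<and> z \<subseteq> y} = insert x {z\<in>P. x \<subset> z \<and> z \<subseteq> y}"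
    using assms by auto
  have m: "mobius P x y = - (\<Sum>z\<in>{z\<in>P. x \<subset> z \<and> z \<subseteq> y}. mobius P z y)"
    using assms by (subst mobius.simps) simp
  show ?thesis unfolding e using assms(1) m by (subst sum.insert) auto
qed

lemma gen_mobius_unique:
  assumes fin: "finite S"
    and g: "\<And>X. X \<subseteq> S \<Longrightarrow> (\<Sum>X'\<in>{X'. X \<subseteq> X' \<and> X' \<subseteq> S}. g X') = (if X \<in> C then 1 else 0)"
    and X: "X \<subseteq> S"
  shows "gen_mobius S C X = g X"
  using X
proof (induction "card (S - X)" arbitrary: X rule: less_induct)
  case less
  have finA: "finite {X'. X \<subset> X' \<and> X' \<subseteq> S}"
    by (rule finite_subset[of _ "Pow S"]) (use fin in auto)
  have IH: "gen_mobius S C X' = g X'" if "X' \<in> {X'. X \<subset> X' \<and> X' \<subseteq> S}" for X'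
  proof -
    have "S - X' \<subset> S - X" using that less.prems by blast
    then have "card (S - X') < card (S - X)" using fin by (intro psubset_card_mono) auto
    then show ?thesis using less.hyps that by auto
  qed
  have "gen_mobius S C X = (if X \<in> C then 1 else 0) - (\<Sum>X'\<in>{X'. X \<subset> X' \<and> X' \<subseteq> S}. gen_mobius S C X')"
    using fin less.prems by (subst gen_mobius.simps) simp
  also have "\<dots> = (if X \<in> C then 1 else 0) - (\<Sum>X'\<in>{X'. X \<subset> X' \<and> X' \<subseteq> S}. g X')"
    using sum.cong[OF refl IH, of "{X'. X \<subset> X' \<and> X' \<subseteq> S}"] by simp
  also have "\<dots> = g X"
  proof -
    have e: "{X'. X \<subseteq> X' \<and> X' \<subseteq> S} = insert X {X'. X \<subset> X' \<and> X' \<subseteq> S}"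
      using less.prems by auto
    have "(\<Sum>X'\<in>{X'. X \<subseteq> X' \<and> X' \<subseteq> S}. g X') = g X + (\<Sum>X'\<in>{X'. X \<subset> X' \<and> X' \<subseteq> S}. g X')"
      unfolding e using finA by (subst sum.insert) auto
    then show ?thesis using g[OF less.prems] by simp
  qed
  finally show ?case .
qed

theorem lemma5p5:
  fixes S :: "'a set" and F :: "'a set set"
  assumes "finite S"
    and "F \<subseteq> Pow S"
    and "nontrivial_family F"
  shows "ncpd S {Y. Y \<subseteq> S \<and> (\<exists>X\<in>F. Y \<subseteq> X)}
         = nci (int_lattice ((\<lambda>X. {Y. Y \<subseteq> S \<and> Y \<subseteq> X}) ` F))
               (\<Union>((\<lambda>X. {Y. Y \<subseteq> S \<and> Y \<subseteq> X}) ` F))"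
proof -
  define P where "P = (\<lambda>X. {Y. Y \<subseteq> S \<and> Y \<subseteq> X})"
  define I where "I = {Y. Y \<subseteq> S \<and> (\<exists>X\<in>F. Y \<subseteq> X)}"
  define top where "top = \<Union>(P ` F)"
  define L where "L = int_lattice (P ` F)"
  have fin: "finite S" and FS: "F \<subseteq> Pow S" and Fne: "F \<noteq> {}" and Ftriv: "\<And>X. X \<in> F \<Longrightarrow> X \<noteq> \<Union>F"
    using assms unfolding nontrivial_family_def by auto
  have Lsub: "L \<subseteq> Pow (Pow S)"
    unfolding L_def int_lattice_def P_def by auto
  have Lfin: "finite L" using Lsub fin by (meson finite_Pow_iff finite_subset)
  have topL: "top \<in> L" unfolding L_def int_lattice_def top_def by auto
  have Ltop: "U \<subseteq> top" if "U \<in> L" for U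
    using that unfolding L_def int_lattice_def top_def by blast
  have Lform: "\<exists>T0. T0 \<subseteq> F \<and> T0 \<noteq> {} \<and> U = P (\<Inter>T0)" if "U \<in> L" "U \<noteq> top" for U
  proof -
    have "U \<in> {\<Inter>T | T. T \<subseteq> P ` F \<and> T \<noteq> {}} \<union> {top}"
      using that(1) by (simp add: L_def int_lattice_def top_def)
    then have "U \<in> {\<Inter>T | T. T \<subseteq> P ` F \<and> T \<noteq> {}}" using that(2) by simp
    then obtain T where T: "U = \<Inter>T" "T \<subseteq> P ` F" "T \<noteq> {}" by blast
    define T0 where "T0 = {A\<in>F. P A \<in> T}"
    have TT: "T = P ` T0" using T(2) unfolding T0_def by auto
    have "T0 \<noteq> {}" using TT T(3) by auto
    moreover have "\<Inter>(P ` T0) = P (\<Inter>T0)" using \<open>T0 \<noteq> {}\<close> unfolding P_def by auto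
    moreover have "T0 \<subseteq> F" unfolding T0_def by blast
    moreover have "U = P (\<Inter>T0)" using T(1) TT \<open>\<Inter>(P ` T0) = P (\<Inter>T0)\<close> by simp
    ultimately show ?thesis by blast
  qed
  have Pmono: "P X \<subseteq> P X' \<longleftrightarrow> X \<subseteq> X'" if "X \<subseteq> S" for X X'
    using that unfolding P_def by auto
  have Ptop: "P A \<noteq> top" if "A \<in> F" for A
  proof
    assume h: "P A = top"
    have "B \<subseteq> A" if "B \<in> F" for B
    proof -
      have "B \<in> top" using that FS unfolding top_def P_def by auto
      then show ?thesis using h unfolding P_def by auto
    qed
    then have "A = \<Union>F" using that by auto
    then show False using Ftriv that by auto
  qed
  define g where "g = (\<lambda>X. if P X \<in> L \<and> P X \<noteq> top then - mobius L (P X) top else 0)"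
  have K: "(\<Sum>X'\<in>{X'. X \<subseteq> X' \<and> X' \<subseteq> S}. g X') = (if X \<in> I then 1 else 0)" if XS: "X \<subseteq> S" for X
  proof -
    define A where "A = {X'. X \<subseteq> X' \<and> X' \<subseteq> S}"
    define B where "B = {X'\<in>A. P X' \<in> L \<and> P X' \<noteq> top}"
    define D where "D = {U\<in>L. U \<noteq> top \<and> P X \<subseteq> U}"
    have finA: "finite A" unfolding A_def by (rule finite_subset[of _ "Pow S"]) (use fin in auto)
    have "(\<Sum>X'\<in>A. g X') = (\<Sum>X'\<in>B. - mobius L (P X') top)"
      unfolding B_def by (subst sum.inter_filter[OF finA]) (simp only: g_def)
    also have "\<dots> = (\<Sum>U\<in>P ` B. - mobius L U top)"
    proof -
      have inj: "inj_on P B"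
      proof (rule inj_onI)
        fix x y assume "x \<in> B" "y \<in> B" "P x = P y"
        then have "x \<subseteq> S" "y \<subseteq> S" unfolding B_def A_def by auto
        then show "x = y" using Pmono[of x y] Pmono[of y x] \<open>P x = P y\<close> by blast
      qed
      show ?thesis by (rule sym, rule sum.reindex_cong[OF inj refl refl])
    qed
    also have "P ` B = D"
    proof
      show "P ` B \<subseteq> D"
      proof
        fix U assume "U \<in> P ` B"
        then obtain X' where X': "X' \<in> B" "U = P X'" by blast
        then have "X \<subseteq> X'" "P X' \<in> L" "P X' \<noteq> top" unfolding B_def A_def by auto
        then show "U \<in> D" unfolding D_def using X'(2) Pmono[OF XS, of X'] by blast
      qed
      show "D \<subseteq> P ` B"
      proof
        fix U assume U: "U \<in> D"
        then obtain T0 where T0: "T0 \<subseteq> F" "T0 \<noteq> {}" "U = P (\<Inter>T0)"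
          using Lform unfolding D_def by blast
        have "\<Inter>T0 \<subseteq> S" using T0 FS by auto
        moreover have "X \<subseteq> \<Inter>T0" using U T0(3) Pmono[OF XS, of "\<Inter>T0"] unfolding D_def by blast
        moreover have "P (\<Inter>T0) \<in> L" "P (\<Inter>T0) \<noteq> top" using U T0(3) unfolding D_def by auto
        ultimately have "\<Inter>T0 \<in> B" unfolding B_def A_def by blast
        then show "U \<in> P ` B" using T0(3) by blast
      qed
    qed
    also have "(\<Sum>U\<in>D. - mobius L U top) = (if X \<in> I then 1 else 0)"
    proof (cases "X \<in> I")
      case True
      then obtain A0 where A0: "A0 \<in> F" "X \<subseteq> A0" unfolding I_def by auto
      define c where "c = \<Inter>{V\<in>P ` F. P X \<subseteq> V}"
      have PA0: "P A0 \<in> {V\<in>P ` F. P X \<subseteq> V}" using A0 Pmono[OF XS, of A0] by blast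
      have cL: "c \<in> L" unfolding c_def L_def int_lattice_def
      proof (rule UnI1, rule CollectI, rule exI, rule conjI)
        show "{V\<in>P ` F. P X \<subseteq> V} \<subseteq> P ` F \<and> {V\<in>P ` F. P X \<subseteq> V} \<noteq> {}" using PA0 by blast
      qed (rule refl)
      have cA: "c \<subseteq> P A0" unfolding c_def using PA0 by (rule Inter_lower)
      have ctop: "c \<noteq> top"
      proof
        assume "c = top"
        then have "top \<subseteq> P A0" using cA by simp
        moreover have "P A0 \<subseteq> top" unfolding top_def using A0 by auto
        ultimately show False using Ptop[OF A0(1)] by auto
      qed
      have DD: "D = {U\<in>L. c \<subseteq> U \<and> U \<subseteq> top} - {top}"
      proof -
        have eqv: "P X \<subseteq> U \<longleftrightarrow> c \<subseteq> U" if "U \<in> L" "U \<noteq> top" for U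
        proof
          assume h: "P X \<subseteq> U"
          have "U \<in> {\<Inter>T | T. T \<subseteq> P ` F \<and> T \<noteq> {}} \<union> {top}"
            using that(1) by (simp add: L_def int_lattice_def top_def)
          then have "U \<in> {\<Inter>T | T. T \<subseteq> P ` F \<and> T \<noteq> {}}" using that(2) by simp
          then obtain T where T: "U = \<Inter>T" "T \<subseteq> P ` F" "T \<noteq> {}" by blast
          have "T \<subseteq> {V\<in>P ` F. P X \<subseteq> V}" using T h by auto
          then show "c \<subseteq> U" unfolding c_def T(1) by auto
        next
          assume "c \<subseteq> U"
          moreover have "P X \<subseteq> c" unfolding c_def by auto
          ultimately show "P X \<subseteq> U" by auto
        qed
        show ?thesis
        proof (rule set_eqI)
          fix U show "U \<in> D \<longleftrightarrow> U \<in> {U\<in>L. c \<subseteq> U \<and> U \<subseteq> top} - {top}"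
            using eqv[of U] Ltop[of U] unfolding D_def by blast
        qed
      qed
      have fin2: "finite {U\<in>L. c \<subseteq> U \<and> U \<subseteq> top}" using Lfin by auto
      have "(\<Sum>U\<in>{U\<in>L. c \<subseteq> U \<and> U \<subseteq> top}. mobius L U top) = 0"
        using mobius_sum_zero[OF Lfin cL topL Ltop[OF cL] ctop] .
      moreover have "(\<Sum>U\<in>{U\<in>L. c \<subseteq> U \<and> U \<subseteq> top}. mobius L U top)
          = mobius L top top + (\<Sum>U\<in>D. mobius L U top)"
        unfolding DD using fin2 topL Ltop[OF cL]
        by (subst sum.remove[of _ top]) auto
      moreover have "mobius L top top = 1" using Lfin topL by (subst mobius.simps) simp
      ultimately show ?thesis using True by (simp add: sum_negf)
    next
      case False
      have "D = {}"
      proof (rule ccontr)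
        assume "D \<noteq> {}"
        then obtain U where U: "U \<in> L" "U \<noteq> top" "P X \<subseteq> U" unfolding D_def by auto
        then obtain T0 where T0: "T0 \<subseteq> F" "T0 \<noteq> {}" "U = P (\<Inter>T0)" using Lform by blast
        then obtain A0 where "A0 \<in> T0" by auto
        then have "X \<subseteq> A0" using U(3) T0(3) Pmono[OF XS] by auto
        then show False using False XS \<open>A0 \<in> T0\<close> T0(1) unfolding I_def by auto
      qed
      then show ?thesis using False by simp
    qed
    finally show ?thesis unfolding A_def .
  qed
  have GM: "gen_mobius S I X = g X" if "X \<subseteq> S" for X
    by (rule gen_mobius_unique[OF fin K that])
  have "ncpd S I = nci L top"
  proof
    show "ncpd S I \<subseteq> nci L top"
      unfolding ncpd_def nci_def using GM unfolding g_def P_def by (auto split: if_splits)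
    show "nci L top \<subseteq> ncpd S I"
    proof
      fix U assume U: "U \<in> nci L top"
      then obtain T0 where T0: "T0 \<subseteq> F" "T0 \<noteq> {}" "U = P (\<Inter>T0)"
        using Lform unfolding nci_def by blast
      have "\<Inter>T0 \<subseteq> S" using T0 FS by auto
      then show "U \<in> ncpd S I" unfolding ncpd_def using U T0 GM[of "\<Inter>T0"]
        unfolding nci_def g_def by (auto simp: P_def)
    qed
  qed
  then show ?thesis unfolding I_def L_def top_def P_def .
qed

end
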